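(* Let $X\sim\mathbb{P}$ be data in a sample space $\mathcal{X}$, let $G$ be a compact topological group acting on $\mathcal{X}$ with Haar probability measure $\mathbb{Q}$, and assume exact invariance: for $\mathbb{Q}$-almost all $g$, $gX$ has the same distribution as $X$. Let $\hat\theta(X)\in\mathbb{R}^p$ be an estimator of a parameter $\theta_0\in\mathbb{R}^p$ such that $(x,g)\mapsto\hat\theta(gx)$ belongs to $L^2(\mathbb{P}\times\mathbb{Q})$, and let $\hat\theta_G(X)=\mathbb{E}_{g\sim\mathbb{Q}}\hat\theta(gX)$ be its augmented version. Then the bias of $\hat\theta_G(X)$ equals the bias of $\hat\theta(X)$, and the covariance matrices satisfy $\mathrm{Cov}(\hat\theta_G(X))\preceq\mathrm{Cov}(\hat\theta(X))$ in the Loewner order; hence the mean squared error $\mathbb{E}\|\hat\theta_G(X)-\theta_0\|_2^2$ is at most $\mathbb{E}\|\hat\theta(X)-\theta_0\|_2^2$. Moreover, for any loss function $L(\theta_0,\cdot)$ that is convex, $\mathbb{E}L(\theta_0,\hat\theta(X))\ge\mathbb{E}L(\theta_0,\hat\theta_G(X))$.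
   Context: The bias of an estimator $T(X)$ of $\theta_0$ is $\mathbb{E}T(X)-\theta_0$. The Haar probability measure $\mathbb{Q}$ is invariant under left and right translations by elements of $G$. *)

theory Defs
  imports "HOL-Probability.Probability" "HOL-Algebra.Group"
begin

definition borel_of :: "'a topology \<Rightarrow> 'a measure" where
  "borel_of T = sigma (topspace T) {U. openin T U}"

definition compact_topological_group :: "('g, 'b) monoid_scheme \<Rightarrow> 'g topology \<Rightarrow> bool" where
  "compact_topological_group G T \<longleftrightarrow>
     group G \<and> topspace T = carrier G \<and> compact_space T \<and>
     continuous_map (prod_topology T T) T (\<lambda>(a, b). a \<otimes>\<^bsub>G\<^esub> b) \<and>
     continuous_map T T (\<lambda>a. inv\<^bsub>G\<^esub> a)"

definition haar_probability :: "('g, 'b) monoid_scheme \<Rightarrow> 'g topology \<Rightarrow> 'g measure \<Rightarrow> bool" where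
  "haar_probability G T Q \<longleftrightarrow>
     prob_space Q \<and> sets Q = sets (borel_of T) \<and> space Q = carrier G \<and>
     (\<forall>g\<in>carrier G. distr Q Q (\<lambda>h. g \<otimes>\<^bsub>G\<^esub> h) = Q) \<and>
     (\<forall>g\<in>carrier G. distr Q Q (\<lambda>h. h \<otimes>\<^bsub>G\<^esub> g) = Q)"

definition measurable_group_action ::
  "('g, 'b) monoid_scheme \<Rightarrow> 'g measure \<Rightarrow> 'x measure \<Rightarrow> ('g \<Rightarrow> 'x \<Rightarrow> 'x) \<Rightarrow> bool" where
  "measurable_group_action G Q P act \<longleftrightarrow>
     (\<lambda>(g, x). act g x) \<in> measurable (Q \<Otimes>\<^sub>M P) P \<and>
     (\<forall>x\<in>space P. act \<one>\<^bsub>G\<^esub> x = x) \<and>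
     (\<forall>g\<in>carrier G. \<forall>h\<in>carrier G. \<forall>x\<in>space P. act (g \<otimes>\<^bsub>G\<^esub> h) x = act g (act h x))"

definition mean_vec :: "'x measure \<Rightarrow> ('x \<Rightarrow> real ^ 'p) \<Rightarrow> real ^ 'p" where
  "mean_vec P X = integral\<^sup>L P X"

definition cov_matrix :: "'x measure \<Rightarrow> ('x \<Rightarrow> real ^ 'p) \<Rightarrow> real ^ 'p ^ 'p" where
  "cov_matrix P X = (\<chi> i j. \<integral>x. (X x $ i - mean_vec P X $ i) * (X x $ j - mean_vec P X $ j) \<partial>P)"

definition loewner_le :: "real ^ 'n ^ 'n \<Rightarrow> real ^ 'n ^ 'n \<Rightarrow> bool" where
  "loewner_le A B \<longleftrightarrow> (\<forall>v. 0 \<le> v \<bullet> ((B - A) *v v))"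

end

theory Submission
  imports Defs
begin

lemma convex_subgrad:
  fixes f :: "'a::euclidean_space \<Rightarrow> real"
  assumes cv: "convex_on UNIV f"
  obtains c where "\<And>y. f z + c \<bullet> (y - z) \<le> f y"
proof -
  define S where "S = {p::'a \<times> real. f (fst p + z) < snd p + f z}"
  have "convex S"
    unfolding convex_def
  proof (intro ballI allI impI)
    fix p q :: "'a \<times> real" and u v :: real
    assume p: "p \<in> S" and q: "q \<in> S" and uv: "0 \<le> u" "0 \<le> v" "u + v = 1"
    obtain a b where pab: "p = (a, b)" by fastforce
    obtain c d where qcd: "q = (c, d)" by fastforce
    have 1: "f (a + z) < b + f z" "f (c + z) < d + f z" using p q by (auto simp: S_def pab qcd)
    have eq: "u *\<^sub>R a + v *\<^sub>R c + z = u *\<^sub>R (a + z) + v *\<^sub>R (c + z)"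
      using uv by (simp add: algebra_simps flip: scaleR_add_left)
    have "f (u *\<^sub>R (a + z) + v *\<^sub>R (c + z)) \<le> u * f (a + z) + v * f (c + z)"
      using cv uv by (simp add: convex_on_def)
    also have "\<dots> < u * (b + f z) + v * (d + f z)"
    proof (cases "u = 0")
      case True then show ?thesis using uv 1 by simp
    next
      case False then have "u > 0" using uv by simp
      have "u * f (a + z) < u * (b + f z)" using \<open>u>0\<close> 1 by simp
      moreover have "v * f (c + z) \<le> v * (d + f z)" using uv 1 by (simp add: mult_left_mono)
      ultimately show ?thesis by linarith
    qed
    also have "\<dots> = (u * b + v * d) + (u + v) * f z" by (simp add: algebra_simps)
    also have "\<dots> = (u * b + v * d) + f z" using uv by simp
    finally show "u *\<^sub>R p + v *\<^sub>R q \<in> S" by (simp add: S_def pab qcd eq)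
  qed
  moreover have "0 \<notin> S" by (simp add: S_def)
  ultimately obtain a where a: "a \<noteq> 0" "\<forall>p\<in>S. 0 \<le> inner a p"
    using separating_hyperplane_set_0 by blast
  obtain a1 a0 where a10: "a = (a1, a0)" by fastforce
  have key: "0 \<le> a1 \<bullet> y + a0 * t" if "f (y + z) < t + f z" for y t
    using a(2) that by (auto simp: S_def a10 inner_Pair)
  have "0 \<le> a0" using key[of 0 1] by simp
  moreover have "a0 \<noteq> 0"
  proof
    assume "a0 = 0"
    then have "a1 \<noteq> 0" using a a10 by (auto simp: zero_prod_def)
    have "0 \<le> a1 \<bullet> (- a1)" using key[of "-a1" "f (- a1 + z) - f z + 1"] \<open>a0 = 0\<close> by simp
    then show False using \<open>a1 \<noteq> 0\<close> by (metis inner_minus_right inner_gt_zero_iff neg_0_le_iff_le not_le)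
  qed
  ultimately have a0p: "a0 > 0" by simp
  show ?thesis
  proof (rule that[of "- (1/a0) *\<^sub>R a1"])
    fix y
    have "0 \<le> a1 \<bullet> (y - z) + a0 * (f y - f z)"
    proof (rule field_le_epsilon)
      fix e :: real assume "0 < e"
      have "0 \<le> a1 \<bullet> (y - z) + a0 * (f y - f z + e / a0)"
        using key[of "y - z" "f y - f z + e / a0"] \<open>0 < e\<close> a0p by simp
      also have "\<dots> = a1 \<bullet> (y - z) + a0 * (f y - f z) + e" using a0p by (simp add: field_simps)
      finally show "0 \<le> a1 \<bullet> (y - z) + a0 * (f y - f z) + e" .
    qed
    then have "- (a1 \<bullet> (y - z)) / a0 \<le> f y - f z" using a0p by (simp add: field_simps)
    then show "f z + (- (1 / a0) *\<^sub>R a1) \<bullet> (y - z) \<le> f y" by (simp add: field_simps)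
  qed
qed

lemma transfer_nn:
  fixes theta :: "'x \<Rightarrow> 'v::topological_space" and h :: "'v \<Rightarrow> ennreal"
  assumes P: "prob_space P" and Q: "prob_space Q"
    and actmB: "\<forall>g\<in>space Q. act g \<in> measurable P P"
    and inv: "AE g in Q. distr P P (act g) = P"
    and tm: "theta \<in> borel_measurable P"
    and Hm: "(\<lambda>(x, g). theta (act g x)) \<in> borel_measurable (P \<Otimes>\<^sub>M Q)"
    and hm: "h \<in> borel_measurable borel"
  shows "(\<integral>\<^sup>+ p. h ((\<lambda>(x, g). theta (act g x)) p) \<partial>(P \<Otimes>\<^sub>M Q)) = (\<integral>\<^sup>+ x. h (theta x) \<partial>P)"
proof -
  interpret P: prob_space P by fact
  interpret Q: prob_space Q by fact
  interpret PQ: pair_sigma_finite P Q by unfold_locales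
  have actm: "\<And>g. g \<in> space Q \<Longrightarrow> act g \<in> measurable P P" using actmB by blast
  have m: "(\<lambda>p. h ((\<lambda>(x, g). theta (act g x)) p)) \<in> borel_measurable (P \<Otimes>\<^sub>M Q)"
    using measurable_compose[OF Hm hm] .
  have "(\<integral>\<^sup>+ p. h ((\<lambda>(x, g). theta (act g x)) p) \<partial>(P \<Otimes>\<^sub>M Q))
      = (\<integral>\<^sup>+ g. (\<integral>\<^sup>+ x. h (theta (act g x)) \<partial>P) \<partial>Q)"
    using PQ.nn_integral_snd[OF m] by simp
  also have "\<dots> = (\<integral>\<^sup>+ g. (\<integral>\<^sup>+ x. h (theta x) \<partial>P) \<partial>Q)"
  proof (rule nn_integral_cong_AE)
    show "AE g in Q. (\<integral>\<^sup>+ x. h (theta (act g x)) \<partial>P) = (\<integral>\<^sup>+ x. h (theta x) \<partial>P)"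
      using inv AE_space
    proof eventually_elim
      case (elim g)
      have "(\<integral>\<^sup>+ x. h (theta x) \<partial>P) = (\<integral>\<^sup>+ x. h (theta x) \<partial>(distr P P (act g)))"
        using elim by simp
      also have "\<dots> = (\<integral>\<^sup>+ x. h (theta (act g x)) \<partial>P)"
        by (rule nn_integral_distr[OF actm[OF elim(2)]]) (use measurable_compose[OF tm hm] in simp)
      finally show ?case by simp
    qed
  qed
  also have "\<dots> = (\<integral>\<^sup>+ x. h (theta x) \<partial>P)"
    by (simp add: Q.emeasure_space_1)
  finally show ?thesis .
qed

lemma transfer_int:
  fixes theta :: "'x \<Rightarrow> 'v::topological_space" and F :: "'v \<Rightarrow> 'b::{banach, second_countable_topology}"
  assumes P: "prob_space P" and Q: "prob_space Q"
    and actmB: "\<forall>g\<in>space Q. act g \<in> measurable P P"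
    and inv: "AE g in Q. distr P P (act g) = P"
    and tm: "theta \<in> borel_measurable P"
    and Hm: "(\<lambda>(x, g). theta (act g x)) \<in> borel_measurable (P \<Otimes>\<^sub>M Q)"
    and Fm: "F \<in> borel_measurable borel"
  shows "integrable (P \<Otimes>\<^sub>M Q) (\<lambda>(x, g). F (theta (act g x))) \<longleftrightarrow> integrable P (\<lambda>x. F (theta x))"
    and "integrable P (\<lambda>x. F (theta x)) \<Longrightarrow>
       (\<integral>x. (\<integral>g. F (theta (act g x)) \<partial>Q) \<partial>P) = (\<integral>x. F (theta x) \<partial>P)"
proof -
  interpret P: prob_space P by fact
  interpret Q: prob_space Q by fact
  interpret PQ: pair_sigma_finite P Q by unfold_locales
  have actm: "\<And>g. g \<in> space Q \<Longrightarrow> act g \<in> measurable P P" using actmB by blast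
  have m: "(\<lambda>p. F ((\<lambda>(x, g). theta (act g x)) p)) \<in> borel_measurable (P \<Otimes>\<^sub>M Q)"
    using measurable_compose[OF Hm Fm] .
  have m': "(\<lambda>(x, g). F (theta (act g x))) \<in> borel_measurable (P \<Otimes>\<^sub>M Q)"
    using m by (simp add: prod.case_distrib)
  have nm: "(\<lambda>v. ennreal (norm (F v))) \<in> borel_measurable borel"
    using measurable_compose[OF Fm borel_measurable_norm] by (rule measurable_compose) simp
  have eq: "(\<integral>\<^sup>+ p. ennreal (norm ((\<lambda>(x, g). F (theta (act g x))) p)) \<partial>(P \<Otimes>\<^sub>M Q))
      = (\<integral>\<^sup>+ x. ennreal (norm (F (theta x))) \<partial>P)"
    using transfer_nn[OF P Q actmB inv tm Hm nm] by (simp add: prod.case_distrib)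
  show iff: "integrable (P \<Otimes>\<^sub>M Q) (\<lambda>(x, g). F (theta (act g x))) \<longleftrightarrow> integrable P (\<lambda>x. F (theta x))"
    unfolding integrable_iff_bounded eq using m' measurable_compose[OF tm Fm] by blast
  assume int: "integrable P (\<lambda>x. F (theta x))"
  then have int2: "integrable (P \<Otimes>\<^sub>M Q) (\<lambda>(x, g). F (theta (act g x)))" using iff by simp
  have "(\<integral>x. (\<integral>g. F (theta (act g x)) \<partial>Q) \<partial>P) = integral\<^sup>L (P \<Otimes>\<^sub>M Q) (\<lambda>(x, g). F (theta (act g x)))"
    using PQ.integral_fst[OF int2] .
  also have "\<dots> = (\<integral>g. (\<integral>x. F (theta (act g x)) \<partial>P) \<partial>Q)"
    using PQ.integral_snd[OF int2] by simp
  also have "\<dots> = (\<integral>g. (\<integral>x. F (theta x) \<partial>P) \<partial>Q)"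
  proof (rule integral_cong_AE)
    show "AE g in Q. (\<integral>x. F (theta (act g x)) \<partial>P) = (\<integral>x. F (theta x) \<partial>P)"
      using inv AE_space
    proof eventually_elim
      case (elim g)
      have "(\<integral>x. F (theta x) \<partial>P) = (\<integral>x. F (theta x) \<partial>(distr P P (act g)))"
        using elim by simp
      also have "\<dots> = (\<integral>x. F (theta (act g x)) \<partial>P)"
        by (rule integral_distr[OF actm[OF elim(2)]]) (rule measurable_compose[OF tm Fm])
      finally show ?case by simp
    qed
  next
    show "(\<lambda>g. \<integral>x. F (theta (act g x)) \<partial>P) \<in> borel_measurable Q"
      using borel_measurable_integrable[OF PQ.integrable_snd[OF int2]] by simp
  qed simp
  also have "\<dots> = (\<integral>x. F (theta x) \<partial>P)" by (simp add: Q.prob_space)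
  finally show "(\<integral>x. (\<integral>g. F (theta (act g x)) \<partial>Q) \<partial>P) = (\<integral>x. F (theta x) \<partial>P)" .
qed

lemma sq1: "(r::real) \<le> 1 + r\<^sup>2"
proof -
  have "0 \<le> (r - 1/2)\<^sup>2" by simp
  then show ?thesis by (simp add: power2_diff field_simps)
qed
lemma sq2: "((a::real) + b)\<^sup>2 \<le> 2 * a\<^sup>2 + 2 * b\<^sup>2"
proof -
  have "0 \<le> (a - b)\<^sup>2" by simp
  then show ?thesis by (simp add: power2_diff power2_sum)
qed

lemma jensen_vec:
  fixes Y :: "'a \<Rightarrow> 'v::euclidean_space" and f :: "'v \<Rightarrow> real"
  assumes M: "prob_space M" and cv: "convex_on UNIV f"
    and iY: "integrable M Y" and iF: "integrable M (\<lambda>g. f (Y g))"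
  shows "f (\<integral>g. Y g \<partial>M) \<le> (\<integral>g. f (Y g) \<partial>M)"
proof -
  interpret M: prob_space M by fact
  define z where "z = (\<integral>g. Y g \<partial>M)"
  obtain c where c: "\<And>y. f z + c \<bullet> (y - z) \<le> f y" using convex_subgrad[OF cv] by blast
  have iL: "integrable M (\<lambda>g. f z + (c \<bullet> Y g - c \<bullet> z))"
    using iY by (auto intro!: Bochner_Integration.integrable_add Bochner_Integration.integrable_diff integrable_inner_right)
  have "(\<integral>g. f z + (c \<bullet> Y g - c \<bullet> z) \<partial>M) \<le> (\<integral>g. f (Y g) \<partial>M)"
    using c by (intro integral_mono[OF iL iF]) (simp add: inner_diff_right)
  moreover have "(\<integral>g. f z + (c \<bullet> Y g - c \<bullet> z) \<partial>M) = f z"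
    using iY by (simp add: M.prob_space z_def)
  ultimately show ?thesis by (simp add: z_def)
qed

lemma convex_sq_norm:
  fixes t :: "'v::real_normed_vector"
  shows "convex_on UNIV (\<lambda>y. (norm (y - t))\<^sup>2)"
  unfolding convex_on_def
proof (intro conjI convex_UNIV ballI allI impI)
  fix a b :: 'v and u v :: real
  assume uv: "0 \<le> u" "0 \<le> v" "u + v = 1"
  have eq: "u *\<^sub>R a + v *\<^sub>R b - t = u *\<^sub>R (a - t) + v *\<^sub>R (b - t)"
    using uv by (simp add: algebra_simps flip: scaleR_add_left)
  have "norm (u *\<^sub>R a + v *\<^sub>R b - t) \<le> u * norm (a - t) + v * norm (b - t)"
    unfolding eq using uv by (metis abs_of_nonneg norm_scaleR norm_triangle_ineq)
  then have "(norm (u *\<^sub>R a + v *\<^sub>R b - t))\<^sup>2 \<le> (u * norm (a - t) + v * norm (b - t))\<^sup>2"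
    by (intro power_mono) auto
  also have "\<dots> \<le> u * (norm (a - t))\<^sup>2 + v * (norm (b - t))\<^sup>2"
    using convex_power2 uv unfolding convex_on_def by auto
  finally show "(norm (u *\<^sub>R a + v *\<^sub>R b - t))\<^sup>2 \<le> u * (norm (a - t))\<^sup>2 + v * (norm (b - t))\<^sup>2" .
qed

lemma convex_sq_inner:
  fixes t w :: "'v::real_inner"
  shows "convex_on UNIV (\<lambda>y. (w \<bullet> (y - t))\<^sup>2)"
  unfolding convex_on_def
proof (intro conjI convex_UNIV ballI allI impI)
  fix a b :: 'v and u v :: real
  assume uv: "0 \<le> u" "0 \<le> v" "u + v = 1"
  have eq: "u *\<^sub>R a + v *\<^sub>R b - t = u *\<^sub>R (a - t) + v *\<^sub>R (b - t)"
    using uv by (simp add: algebra_simps flip: scaleR_add_left)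
  have "(w \<bullet> (u *\<^sub>R a + v *\<^sub>R b - t))\<^sup>2 = (u * (w \<bullet> (a - t)) + v * (w \<bullet> (b - t)))\<^sup>2"
    unfolding eq by (simp add: inner_add_right)
  also have "\<dots> \<le> u * (w \<bullet> (a - t))\<^sup>2 + v * (w \<bullet> (b - t))\<^sup>2"
    using convex_power2 uv unfolding convex_on_def by auto
  finally show "(w \<bullet> (u *\<^sub>R a + v *\<^sub>R b - t))\<^sup>2 \<le> u * (w \<bullet> (a - t))\<^sup>2 + v * (w \<bullet> (b - t))\<^sup>2" .
qed

lemma cov_qf:
  fixes Y :: "'x \<Rightarrow> real ^ 'p"
  assumes M: "prob_space M" and Ym: "Y \<in> borel_measurable M"
    and iY: "integrable M (\<lambda>x. (norm (Y x - mean_vec M Y))\<^sup>2)"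
  shows "w \<bullet> (cov_matrix M Y *v w) = (\<integral>x. (w \<bullet> (Y x - mean_vec M Y))\<^sup>2 \<partial>M)"
proof -
  define m where "m = mean_vec M Y"
  define D where "D x = Y x - m" for x
  have Dm: "D \<in> borel_measurable M" unfolding D_def[abs_def] using Ym by measurable
  have ip: "integrable M (\<lambda>x. D x $ i * D x $ j)" for i j
  proof (rule Bochner_Integration.integrable_bound[OF iY])
    show "(\<lambda>x. D x $ i * D x $ j) \<in> borel_measurable M" using measurable_compose[OF Dm borel_measurable_nth] by measurable
    show "AE x in M. norm (D x $ i * D x $ j) \<le> norm ((norm (Y x - mean_vec M Y))\<^sup>2)"
    proof (rule AE_I2)
      fix x
      have "\<bar>D x $ i\<bar> * \<bar>D x $ j\<bar> \<le> norm (D x) * norm (D x)"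
        by (intro mult_mono) (auto simp: component_le_norm_cart)
      then show "norm (D x $ i * D x $ j) \<le> norm ((norm (Y x - mean_vec M Y))\<^sup>2)"
        by (simp add: D_def m_def abs_mult power2_eq_square)
    qed
  qed
  have pt: "(w \<bullet> D x)\<^sup>2 = (\<Sum>i\<in>UNIV. \<Sum>j\<in>UNIV. w $ i * w $ j * (D x $ i * D x $ j))" for x
    by (simp add: inner_vec_def power2_eq_square sum_product mult_ac)
  have "(\<integral>x. (w \<bullet> D x)\<^sup>2 \<partial>M) = (\<integral>x. (\<Sum>i\<in>UNIV. \<Sum>j\<in>UNIV. w $ i * w $ j * (D x $ i * D x $ j)) \<partial>M)"
    by (simp add: pt)
  also have "\<dots> = (\<Sum>i\<in>UNIV. \<Sum>j\<in>UNIV. w $ i * w $ j * (\<integral>x. D x $ i * D x $ j \<partial>M))"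
    using ip by (simp add: Bochner_Integration.integral_sum Bochner_Integration.integrable_sum)
  also have "\<dots> = w \<bullet> (cov_matrix M Y *v w)"
    by (simp add: inner_vec_def matrix_vector_mult_def cov_matrix_def D_def m_def sum_distrib_left mult_ac)
  finally show ?thesis by (simp add: D_def m_def)
qed

theorem proposition4p2:
  fixes G :: "('g, 'b) monoid_scheme" and T :: "'g topology" and Q :: "'g measure"
    and P :: "'x measure" and act :: "'g \<Rightarrow> 'x \<Rightarrow> 'x"
    and theta :: "'x \<Rightarrow> real ^ 'p" and theta0 :: "real ^ 'p"
  assumes grp: "compact_topological_group G T"
    and haar: "haar_probability G T Q"
    and P: "prob_space P"
    and action: "measurable_group_action G Q P act"
    and inv: "AE g in Q. distr P P (act g) = P"
    and theta_meas: "theta \<in> borel_measurable P"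
    and L2_meas: "(\<lambda>(x, g). theta (act g x)) \<in> borel_measurable (P \<Otimes>\<^sub>M Q)"
    and L2: "integrable (P \<Otimes>\<^sub>M Q) (\<lambda>(x, g). (norm (theta (act g x)))\<^sup>2)"
  defines "thetaG \<equiv> (\<lambda>x. \<integral>g. theta (act g x) \<partial>Q)"
  shows "mean_vec P thetaG - theta0 = mean_vec P theta - theta0 \<and>
         loewner_le (cov_matrix P thetaG) (cov_matrix P theta) \<and>
         (\<integral>x. (norm (thetaG x - theta0))\<^sup>2 \<partial>P) \<le> (\<integral>x. (norm (theta x - theta0))\<^sup>2 \<partial>P) \<and>
         (\<forall>L :: real ^ 'p \<Rightarrow> real ^ 'p \<Rightarrow> real.
           convex_on UNIV (L theta0) \<longrightarrow> integrable P (\<lambda>x. L theta0 (theta x)) \<longrightarrow>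
           integrable P (\<lambda>x. L theta0 (thetaG x)) \<and>
           (\<integral>x. L theta0 (thetaG x) \<partial>P) \<le> (\<integral>x. L theta0 (theta x) \<partial>P))"
proof -
  have Qp: "prob_space Q" using haar by (simp add: haar_probability_def)
  interpret P: prob_space P by fact
  interpret Q: prob_space Q by fact
  interpret PQ: pair_sigma_finite P Q by unfold_locales
  have actm: "\<forall>g\<in>space Q. act g \<in> measurable P P"
    using measurable_Pair2[OF action[unfolded measurable_group_action_def, THEN conjunct1]] by simp
  note tr = transfer_int[where act=act and Q=Q and P=P and theta=theta, OF P Qp actm inv theta_meas L2_meas]
  have n2m: "(\<lambda>v::real^'p. (norm v)\<^sup>2) \<in> borel_measurable borel" by measurable
  have idm: "(\<lambda>v::real^'p. v) \<in> borel_measurable borel" by simp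
  have thL2: "integrable P (\<lambda>x. (norm (theta x))\<^sup>2)"
    using tr(1)[OF n2m] L2 by simp
  have thL1: "integrable P theta"
  proof (rule Bochner_Integration.integrable_bound[of _ "\<lambda>x. 1 + (norm (theta x))\<^sup>2"])
    show "integrable P (\<lambda>x. 1 + (norm (theta x))\<^sup>2)" using thL2 by simp
    show "theta \<in> borel_measurable P" by fact
    show "AE x in P. norm (theta x) \<le> norm (1 + (norm (theta x))\<^sup>2)"
    proof (rule AE_I2)
      fix x
      have "norm (theta x) \<le> 1 + (norm (theta x))\<^sup>2"
        by (rule sq1)
      then show "norm (theta x) \<le> norm (1 + (norm (theta x))\<^sup>2)" by simp
    qed
  qed
  have intPQ: "integrable (P \<Otimes>\<^sub>M Q) (\<lambda>(x, g). theta (act g x))"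
    using tr(1)[OF idm] thL1 by simp
  have tGi: "integrable P thetaG"
    using PQ.integrable_fst[OF intPQ] by (simp add: thetaG_def)
  have tGm: "thetaG \<in> borel_measurable P" using tGi by (rule borel_measurable_integrable)
  have mean: "mean_vec P thetaG = mean_vec P theta"
    using tr(2)[OF idm] thL1 by (simp add: mean_vec_def thetaG_def)
  have AEi: "AE x in P. integrable Q (\<lambda>g. theta (act g x))"
    using PQ.AE_integrable_fst[OF intPQ] by simp
  have CV: "integrable P (\<lambda>x. f (thetaG x)) \<and> (\<integral>x. f (thetaG x) \<partial>P) \<le> (\<integral>x. f (theta x) \<partial>P)"
    if cv: "convex_on UNIV f" and iF: "integrable P (\<lambda>x. f (theta x))" for f :: "real^'p \<Rightarrow> real"
  proof -
    have fm: "f \<in> borel_measurable borel"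
      using convex_on_continuous[OF open_UNIV cv] by (rule borel_measurable_continuous_onI)
    have intf: "integrable (P \<Otimes>\<^sub>M Q) (\<lambda>(x, g). f (theta (act g x)))"
      using tr(1)[OF fm] iF by simp
    have AEf: "AE x in P. integrable Q (\<lambda>g. f (theta (act g x)))"
      using PQ.AE_integrable_fst[OF intf] by simp
    have intI: "integrable P (\<lambda>x. \<integral>g. f (theta (act g x)) \<partial>Q)"
      using PQ.integrable_fst[OF intf] by simp
    have eqI: "(\<integral>x. (\<integral>g. f (theta (act g x)) \<partial>Q) \<partial>P) = (\<integral>x. f (theta x) \<partial>P)"
      using tr(2)[OF fm iF] .
    obtain c where c: "\<And>y. f 0 + c \<bullet> (y - 0) \<le> f y" using convex_subgrad[OF cv] by blast
    have bnd: "AE x in P. f 0 + c \<bullet> thetaG x \<le> f (thetaG x) \<and> f (thetaG x) \<le> (\<integral>g. f (theta (act g x)) \<partial>Q)"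
      using AEi AEf
    proof eventually_elim
      case (elim x)
      show ?case using c[of "thetaG x"] jensen_vec[OF Qp cv elim] by (simp add: thetaG_def)
    qed
    have fGm: "(\<lambda>x. f (thetaG x)) \<in> borel_measurable P" using measurable_compose[OF tGm fm] .
    have iL: "integrable P (\<lambda>x. f 0 + c \<bullet> thetaG x)"
      using tGi by (auto intro!: Bochner_Integration.integrable_add integrable_inner_right)
    have iG: "integrable P (\<lambda>x. f (thetaG x))"
    proof (rule Bochner_Integration.integrable_bound[of _ "\<lambda>x. \<bar>f 0 + c \<bullet> thetaG x\<bar> + \<bar>\<integral>g. f (theta (act g x)) \<partial>Q\<bar>"])
      show "integrable P (\<lambda>x. \<bar>f 0 + c \<bullet> thetaG x\<bar> + \<bar>\<integral>g. f (theta (act g x)) \<partial>Q\<bar>)"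
        using integrable_abs[OF iL] integrable_abs[OF intI] by (rule Bochner_Integration.integrable_add)
      show "(\<lambda>x. f (thetaG x)) \<in> borel_measurable P" by fact
      show "AE x in P. norm (f (thetaG x)) \<le> norm (\<bar>f 0 + c \<bullet> thetaG x\<bar> + \<bar>\<integral>g. f (theta (act g x)) \<partial>Q\<bar>)"
        using bnd by eventually_elim auto
    qed
    have "(\<integral>x. f (thetaG x) \<partial>P) \<le> (\<integral>x. (\<integral>g. f (theta (act g x)) \<partial>Q) \<partial>P)"
      using bnd by (intro integral_mono_AE[OF iG intI]) auto
    then show ?thesis using iG eqI by simp
  qed
  have tm2: "integrable P (\<lambda>x. (norm (theta x - t))\<^sup>2)" for t
  proof (rule Bochner_Integration.integrable_bound[of _ "\<lambda>x. 2 * (norm (theta x))\<^sup>2 + 2 * (norm t)\<^sup>2"])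
    show "integrable P (\<lambda>x. 2 * (norm (theta x))\<^sup>2 + 2 * (norm t)\<^sup>2)" using thL2 by simp
    show "(\<lambda>x. (norm (theta x - t))\<^sup>2) \<in> borel_measurable P" using theta_meas by measurable
    show "AE x in P. norm ((norm (theta x - t))\<^sup>2) \<le> norm (2 * (norm (theta x))\<^sup>2 + 2 * (norm t)\<^sup>2)"
    proof (rule AE_I2)
      fix x
      have "norm (theta x - t) \<le> norm (theta x) + norm t" by (rule norm_triangle_ineq4)
      then have "(norm (theta x - t))\<^sup>2 \<le> (norm (theta x) + norm t)\<^sup>2" by (intro power_mono) auto
      also have "\<dots> \<le> 2 * (norm (theta x))\<^sup>2 + 2 * (norm t)\<^sup>2"
        by (rule sq2)
      finally show "norm ((norm (theta x - t))\<^sup>2) \<le> norm (2 * (norm (theta x))\<^sup>2 + 2 * (norm t)\<^sup>2)" by simp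
    qed
  qed
  have mse: "(\<integral>x. (norm (thetaG x - theta0))\<^sup>2 \<partial>P) \<le> (\<integral>x. (norm (theta x - theta0))\<^sup>2 \<partial>P)"
    using CV[OF convex_sq_norm tm2] by simp
  define m where "m = mean_vec P theta"
  have tGm2: "integrable P (\<lambda>x. (norm (thetaG x - m))\<^sup>2)"
    using CV[OF convex_sq_norm tm2] by simp
  have loew: "loewner_le (cov_matrix P thetaG) (cov_matrix P theta)"
    unfolding loewner_le_def
  proof
    fix w :: "real^'p"
    have iw: "integrable P (\<lambda>x. (w \<bullet> (theta x - m))\<^sup>2)"
    proof (rule Bochner_Integration.integrable_bound[of _ "\<lambda>x. (norm w)\<^sup>2 * (norm (theta x - m))\<^sup>2"])
      show "integrable P (\<lambda>x. (norm w)\<^sup>2 * (norm (theta x - m))\<^sup>2)" using tm2 by simp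
      show "(\<lambda>x. (w \<bullet> (theta x - m))\<^sup>2) \<in> borel_measurable P" using theta_meas by measurable
      show "AE x in P. norm ((w \<bullet> (theta x - m))\<^sup>2) \<le> norm ((norm w)\<^sup>2 * (norm (theta x - m))\<^sup>2)"
      proof (rule AE_I2)
        fix x
        have "\<bar>w \<bullet> (theta x - m)\<bar> \<le> norm w * norm (theta x - m)" by (rule Cauchy_Schwarz_ineq2)
        then have "\<bar>w \<bullet> (theta x - m)\<bar>\<^sup>2 \<le> (norm w * norm (theta x - m))\<^sup>2" by (intro power_mono) auto
        then show "norm ((w \<bullet> (theta x - m))\<^sup>2) \<le> norm ((norm w)\<^sup>2 * (norm (theta x - m))\<^sup>2)"
          by (simp add: power_mult_distrib)
      qed
    qed
    have le: "(\<integral>x. (w \<bullet> (thetaG x - m))\<^sup>2 \<partial>P) \<le> (\<integral>x. (w \<bullet> (theta x - m))\<^sup>2 \<partial>P)"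
      using CV[OF convex_sq_inner iw] by simp
    have q1: "w \<bullet> (cov_matrix P theta *v w) = (\<integral>x. (w \<bullet> (theta x - m))\<^sup>2 \<partial>P)"
      using cov_qf[OF P theta_meas tm2[of "mean_vec P theta"]] by (simp add: m_def)
    have q2: "w \<bullet> (cov_matrix P thetaG *v w) = (\<integral>x. (w \<bullet> (thetaG x - m))\<^sup>2 \<partial>P)"
      using cov_qf[OF P tGm, of w] tGm2 mean by (simp add: m_def)
    show "0 \<le> w \<bullet> ((cov_matrix P theta - cov_matrix P thetaG) *v w)"
      using le q1 q2 by (simp add: matrix_vector_mult_diff_rdistrib inner_diff_right)
  qed
  have CVL: "\<forall>L :: real ^ 'p \<Rightarrow> real ^ 'p \<Rightarrow> real.
           convex_on UNIV (L theta0) \<longrightarrow> integrable P (\<lambda>x. L theta0 (theta x)) \<longrightarrow>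
           integrable P (\<lambda>x. L theta0 (thetaG x)) \<and>
           (\<integral>x. L theta0 (thetaG x) \<partial>P) \<le> (\<integral>x. L theta0 (theta x) \<partial>P)"
  proof (intro allI impI)
    fix L :: "real ^ 'p \<Rightarrow> real ^ 'p \<Rightarrow> real"
    assume a: "convex_on UNIV (L theta0)" "integrable P (\<lambda>x. L theta0 (theta x))"
    show "integrable P (\<lambda>x. L theta0 (thetaG x)) \<and>
           (\<integral>x. L theta0 (thetaG x) \<partial>P) \<le> (\<integral>x. L theta0 (theta x) \<partial>P)"
      by (rule CV[OF a])
  qed
  have bias: "mean_vec P thetaG - theta0 = mean_vec P theta - theta0" using mean by simp
  show ?thesis using bias loew mse CVL by blast
qed

end
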